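(* Let $1,2,3,4$ be four distinct vertices of $G$ such that $G[\{1,2,3\}]$ has edge set exactly $\{12,13,23\}$, $G[\{2,3,4\}]$ has edge set exactly $\{23,24,34\}$, and $w_{12}\ge\max\{w_{13},w_{23}\}$ (nothing is assumed about whether $14$ is an edge). If $\Gamma_G$ is population monotonic, then $w_{24}\ge w_{23}+w_{34}$.
   Context: $G=(V,E;w)$ is a finite simple graph with edge weights $w:E\to\mathbb{R}$, $w_e>0$ for all $e\in E$; $w_{ij}$ denotes the weight of edge $ij$. The matching game on $G$ is the cooperative game $\Gamma_G=(N,\gamma)$ with player set $N=V$ and, for $S\subseteq N$, $\gamma(S)$ equal to the maximum weight of a matching in the induced subgraph $G[S]$ (so $\gamma(\emptyset)=0$). A population monotonic allocation scheme (PMAS) is a family $(\boldsymbol{x}_S)_{\emptyset\neq S\subseteq N}$ with $\boldsymbol{x}_S=(x_{S,i})_{i\in S}\in\mathbb{R}^S$ such that (efficiency) $\sum_{i\in S}x_{S,i}=\gamma(S)$ for every nonempty $S\subseteq N$, and (monotonicity) $x_{S,i}\le x_{T,i}$ whenever $\emptyset\ne S\subseteq T\subseteq N$ and $i\in S$. $\Gamma_G$ is called population monotonic if it admits a PMAS. *)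

theory Defs
  imports Complex_Main
begin

definition simple_graph :: "'a set \<Rightarrow> 'a set set \<Rightarrow> bool" where
  "simple_graph V E \<longleftrightarrow> finite V \<and> (\<forall>e\<in>E. e \<subseteq> V \<and> card e = 2)"

definition positive_weights :: "'a set set \<Rightarrow> ('a set \<Rightarrow> real) \<Rightarrow> bool" where
  "positive_weights E w \<longleftrightarrow> (\<forall>e\<in>E. w e > 0)"

definition matching_in :: "'a set set \<Rightarrow> 'a set \<Rightarrow> 'a set set \<Rightarrow> bool" where
  "matching_in E S M \<longleftrightarrow> M \<subseteq> E \<and> (\<forall>e\<in>M. e \<subseteq> S) \<and>
     (\<forall>e\<in>M. \<forall>f\<in>M. e \<noteq> f \<longrightarrow> e \<inter> f = {})"

definition gamma :: "'a set set \<Rightarrow> ('a set \<Rightarrow> real) \<Rightarrow> 'a set \<Rightarrow> real" where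
  "gamma E w S = Max {sum w M | M. matching_in E S M}"

definition is_PMAS :: "'a set \<Rightarrow> 'a set set \<Rightarrow> ('a set \<Rightarrow> real) \<Rightarrow> ('a set \<Rightarrow> 'a \<Rightarrow> real) \<Rightarrow> bool" where
  "is_PMAS V E w x \<longleftrightarrow>
     (\<forall>S. S \<subseteq> V \<and> S \<noteq> {} \<longrightarrow> (\<Sum>i\<in>S. x S i) = gamma E w S) \<and>
     (\<forall>S T i. S \<noteq> {} \<and> S \<subseteq> T \<and> T \<subseteq> V \<and> i \<in> S \<longrightarrow> x S i \<le> x T i)"

definition population_monotonic :: "'a set \<Rightarrow> 'a set set \<Rightarrow> ('a set \<Rightarrow> real) \<Rightarrow> bool" where
  "population_monotonic V E w \<longleftrightarrow> (\<exists>x. is_PMAS V E w x)"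

end

theory Submission
  imports Defs
begin

lemma match_fin:
  assumes "finite S"
  shows "finite {sum w M | M. matching_in E S M}"
proof -
  have "{M. matching_in E S M} \<subseteq> Pow (Pow S)" unfolding matching_in_def by auto
  hence "finite {M. matching_in E S M}" using assms by (meson finite_Pow_iff rev_finite_subset)
  thus ?thesis by (simp add: setcompr_eq_image)
qed

lemma gamma_ge:
  assumes "finite S" "matching_in E S M"
  shows "sum w M \<le> gamma E w S"
  unfolding gamma_def using match_fin[OF assms(1)] assms(2) by (intro Max_ge) auto

lemma gamma_le:
  assumes "finite S" "\<And>M. matching_in E S M \<Longrightarrow> sum w M \<le> c"
  shows "gamma E w S \<le> c"
proof -
  have "matching_in E S {}" unfolding matching_in_def by auto
  thus ?thesis unfolding gamma_def using match_fin[OF assms(1)] assms(2)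
    by (subst Max_le_iff) auto
qed

lemma tri:
  fixes w :: "'a set \<Rightarrow> real"
  assumes "M \<subseteq> {A,B,C}" "\<forall>e\<in>M. \<forall>f\<in>M. e \<noteq> f \<longrightarrow> e \<inter> f = {}"
    "A \<inter> B \<noteq> {}" "A \<inter> C \<noteq> {}" "B \<inter> C \<noteq> {}"
    "w A \<ge> 0" "w B \<ge> 0" "w C \<ge> 0"
  shows "sum w M \<le> max (w A) (max (w B) (w C))"
proof (cases "M = {}")
  case True have "w A \<le> max (w A) (max (w B) (w C))" by (rule max.cobounded1)
  thus ?thesis using True assms(6) by simp
next
  case False
  then obtain e where e: "e \<in> M" by blast
  have nA: "A \<noteq> {}" "B \<noteq> {}" "C \<noteq> {}" using assms(3-5) by auto
  have ne: "\<And>f g. f \<in> {A,B,C} \<Longrightarrow> g \<in> {A,B,C} \<Longrightarrow> f \<inter> g \<noteq> {}"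
  proof -
    fix f g assume f: "f \<in> {A,B,C}" and g: "g \<in> {A,B,C}"
    have "f = A \<or> f = B \<or> f = C" using f by simp
    moreover have "g = A \<or> g = B \<or> g = C" using g by simp
    ultimately show "f \<inter> g \<noteq> {}" using assms(3-5) nA
      by (elim disjE) (simp_all add: Int_commute)
  qed
  have all: "\<And>f. f \<in> M \<Longrightarrow> f = e"
  proof -
    fix f assume f: "f \<in> M"
    have i: "f \<inter> e \<noteq> {}" using ne[of f e] f e assms(1) by (meson subsetD)
    have "f \<noteq> e \<longrightarrow> f \<inter> e = {}" using assms(2) f e by simp
    thus "f = e" using i by simp
  qed
  from all e have "M = {e}" by blast
  moreover have "e = A \<or> e = B \<or> e = C" using e assms(1) by blast
  hence "w e \<le> max (w A) (max (w B) (w C))"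
    by (elim disjE) (simp_all add: le_max_iff_disj)
  ultimately show ?thesis by simp
qed

theorem mainTheorem4:
  fixes V :: "'a set" and E :: "'a set set" and w :: "'a set \<Rightarrow> real"
    and v1 v2 v3 v4 :: 'a
  assumes "simple_graph V E" and "positive_weights E w"
    and "v1 \<in> V" "v2 \<in> V" "v3 \<in> V" "v4 \<in> V"
    and "distinct [v1, v2, v3, v4]"
    and "{e \<in> E. e \<subseteq> {v1, v2, v3}} = {{v1, v2}, {v1, v3}, {v2, v3}}"
    and "{e \<in> E. e \<subseteq> {v2, v3, v4}} = {{v2, v3}, {v2, v4}, {v3, v4}}"
    and "w {v1, v2} \<ge> max (w {v1, v3}) (w {v2, v3})"
    and "population_monotonic V E w"
  shows "w {v2, v4} \<ge> w {v2, v3} + w {v3, v4}"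
proof -
  obtain x where x: "is_PMAS V E w x" using assms(11) unfolding population_monotonic_def by blast
  have eff: "\<And>S. S \<subseteq> V \<Longrightarrow> S \<noteq> {} \<Longrightarrow> (\<Sum>i\<in>S. x S i) = gamma E w S"
    using x unfolding is_PMAS_def by blast
  have mon: "\<And>S T i. S \<noteq> {} \<Longrightarrow> S \<subseteq> T \<Longrightarrow> T \<subseteq> V \<Longrightarrow> i \<in> S \<Longrightarrow> x S i \<le> x T i"
    using x unfolding is_PMAS_def by blast
  have E12: "{v1,v2} \<in> E" and E13: "{v1,v3} \<in> E" and E23: "{v2,v3} \<in> E"
    using assms(8) by blast+
  have E24: "{v2,v4} \<in> E" and E34: "{v3,v4} \<in> E" using assms(9) by blast+
  have pw: "\<And>e. e \<in> E \<Longrightarrow> w e > 0" using assms(2) unfolding positive_weights_def by blast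
  have d: "v1 \<noteq> v2" "v1 \<noteq> v3" "v1 \<noteq> v4" "v2 \<noteq> v3" "v2 \<noteq> v4" "v3 \<noteq> v4" using assms(7) by auto
  have card2: "\<And>e. e \<in> E \<Longrightarrow> card e = 2" using assms(1) unfolding simple_graph_def by blast
  have g3: "gamma E w {v3} \<le> 0"
  proof (rule gamma_le)
    fix M assume m: "matching_in E {v3} M"
    have "M = {}"
    proof (rule ccontr)
      assume "M \<noteq> {}" then obtain e where "e \<in> M" by blast
      hence "e \<in> E" "e \<subseteq> {v3}" using m unfolding matching_in_def by auto
      hence "card e \<le> card {v3}" by (intro card_mono) auto
      hence "card e \<le> 1" by simp
      thus False using card2[OF \<open>e \<in> E\<close>] by simp
    qed
    thus "sum w M \<le> 0" by simp
  qed auto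
  have x3: "x {v3} v3 \<le> 0" using eff[of "{v3}"] g3 assms(5) by simp
  have g12: "w {v1,v2} \<le> gamma E w {v1,v2}"
    using gamma_ge[of "{v1,v2}" E "{{v1,v2}}" w] E12 unfolding matching_in_def by auto
  have g23: "w {v2,v3} \<le> gamma E w {v2,v3}"
    using gamma_ge[of "{v2,v3}" E "{{v2,v3}}" w] E23 unfolding matching_in_def by auto
  have g34: "w {v3,v4} \<le> gamma E w {v3,v4}"
    using gamma_ge[of "{v3,v4}" E "{{v3,v4}}" w] E34 unfolding matching_in_def by auto
  have s12: "x {v1,v2} v1 + x {v1,v2} v2 = gamma E w {v1,v2}"
    using eff[of "{v1,v2}"] assms(3,4) d by simp
  have s23: "x {v2,v3} v2 + x {v2,v3} v3 = gamma E w {v2,v3}"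
    using eff[of "{v2,v3}"] assms(4,5) d by simp
  have s34: "x {v3,v4} v3 + x {v3,v4} v4 = gamma E w {v3,v4}"
    using eff[of "{v3,v4}"] assms(5,6) d by simp
  have g123: "gamma E w {v1,v2,v3} \<le> w {v1,v2}"
  proof (rule gamma_le)
    fix M assume m: "matching_in E {v1,v2,v3} M"
    have "M \<subseteq> {e \<in> E. e \<subseteq> {v1,v2,v3}}" using m unfolding matching_in_def by blast
    hence mm: "M \<subseteq> {{v1, v2}, {v1, v3}, {v2, v3}}" using assms(8) by simp
    have dj: "\<forall>e\<in>M. \<forall>f\<in>M. e \<noteq> f \<longrightarrow> e \<inter> f = {}" using m unfolding matching_in_def by blast
    have "sum w M \<le> max (w {v1, v2}) (max (w {v1, v3}) (w {v2, v3}))"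
      by (rule tri[OF mm dj]) (use pw E12 E13 E23 in \<open>auto intro: less_imp_le\<close>)
    thus "sum w M \<le> w {v1,v2}" using assms(10) by linarith
  qed auto
  have s123: "x {v1,v2,v3} v1 + x {v1,v2,v3} v2 + x {v1,v2,v3} v3 = gamma E w {v1,v2,v3}"
    using eff[of "{v1,v2,v3}"] assms(3,4,5) d by simp
  have "x {v1,v2} v1 \<le> x {v1,v2,v3} v1" "x {v1,v2} v2 \<le> x {v1,v2,v3} v2"
    "x {v3} v3 \<le> x {v1,v2,v3} v3" "x {v2,v3} v3 \<le> x {v1,v2,v3} v3"
    using assms(3,4,5) by (auto intro!: mon)
  hence x23_3: "x {v2,v3} v3 \<le> 0" using s12 s123 g12 g123 x3 by linarith
  have g234: "gamma E w {v2,v3,v4} \<le> max (w {v2, v3}) (max (w {v2, v4}) (w {v3, v4}))"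
  proof (rule gamma_le)
    fix M assume m: "matching_in E {v2,v3,v4} M"
    have "M \<subseteq> {e \<in> E. e \<subseteq> {v2,v3,v4}}" using m unfolding matching_in_def by blast
    hence mm: "M \<subseteq> {{v2, v3}, {v2, v4}, {v3, v4}}" using assms(9) by simp
    have dj: "\<forall>e\<in>M. \<forall>f\<in>M. e \<noteq> f \<longrightarrow> e \<inter> f = {}" using m unfolding matching_in_def by blast
    have "sum w M \<le> max (w {v2, v3}) (max (w {v2, v4}) (w {v3, v4}))"
      by (rule tri[OF mm dj]) (use pw E23 E24 E34 in \<open>auto intro: less_imp_le\<close>)
    thus "sum w M \<le> max (w {v2, v3}) (max (w {v2, v4}) (w {v3, v4}))" .
  qed auto
  have s234: "x {v2,v3,v4} v2 + x {v2,v3,v4} v3 + x {v2,v3,v4} v4 = gamma E w {v2,v3,v4}"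
    using eff[of "{v2,v3,v4}"] assms(4,5,6) d by simp
  have "x {v2,v3} v2 \<le> x {v2,v3,v4} v2" "x {v3,v4} v3 \<le> x {v2,v3,v4} v3"
    "x {v3,v4} v4 \<le> x {v2,v3,v4} v4"
    using assms(4,5,6) by (auto intro!: mon)
  hence h: "w {v2,v3} + w {v3,v4} \<le> max (w {v2, v3}) (max (w {v2, v4}) (w {v3, v4}))"
    using s234 g234 s23 s34 g23 g34 x23_3 by linarith
  have p: "w {v2,v3} > 0" "w {v3,v4} > 0" using pw E23 E34 by auto
  have "max (w {v2, v3}) (max (w {v2, v4}) (w {v3, v4})) = w {v2, v3} \<or>
        max (w {v2, v3}) (max (w {v2, v4}) (w {v3, v4})) = w {v2, v4} \<or>
        max (w {v2, v3}) (max (w {v2, v4}) (w {v3, v4})) = w {v3, v4}"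
    unfolding max_def by simp
  thus ?thesis using h p by linarith
qed

end
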